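(* Let $\mathbb{D}\subset\mathbb{C}$ be the unit disc and $\mathbb{B}^n\subset\mathbb{R}^n$ ($n\ge 3$) the open unit ball with boundary sphere $S^{n-1}$. Assume $F:\mathbb{D}\to\mathbb{B}^n$ is a conformal minimal immersion with $F(0)=0$, and that for some $z_0$ with $|z_0|=1$, $F$ extends to $z_0$ with $F(z_0)\in S^{n-1}$. If the differential $dF(z_0)$ exists, then $\|dF(z_0)\|\ge 1$.
   Context: A conformal minimal immersion $F=F(x,y)$, $z=x+iy$, is a harmonic immersion with $\langle F_x,F_x\rangle=\langle F_y,F_y\rangle$ and $\langle F_x,F_y\rangle=0$. For such a map $\|dF\|$ equals the common length $|F_x|=|F_y|$. *)

theory Defs
  imports "HOL-Analysis.Analysis"
begin

definition pdx :: "(complex \<Rightarrow> 'a::real_normed_vector) \<Rightarrow> complex \<Rightarrow> 'a" where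
  "pdx F z = frechet_derivative F (at z) 1"

definition pdy :: "(complex \<Rightarrow> 'a::real_normed_vector) \<Rightarrow> complex \<Rightarrow> 'a" where
  "pdy F z = frechet_derivative F (at z) \<i>"

definition harmonic_on :: "(complex \<Rightarrow> 'a::real_normed_vector) \<Rightarrow> complex set \<Rightarrow> bool" where
  "harmonic_on F S \<longleftrightarrow> open S \<and> F differentiable_on S \<and>
     pdx F differentiable_on S \<and> pdy F differentiable_on S \<and>
     continuous_on S (pdx (pdx F)) \<and> continuous_on S (pdy (pdx F)) \<and>
     continuous_on S (pdx (pdy F)) \<and> continuous_on S (pdy (pdy F)) \<and>
     (\<forall>z\<in>S. pdx (pdx F) z + pdy (pdy F) z = 0)"

text \<open>Conformal minimal immersion: harmonic, conformal (|F_x| = |F_y|, F_x . F_y = 0),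
  and an immersion (for conformal maps: F_x \<noteq> 0).\<close>
definition conformal_minimal_immersion_on :: "(complex \<Rightarrow> 'a::real_inner) \<Rightarrow> complex set \<Rightarrow> bool" where
  "conformal_minimal_immersion_on F S \<longleftrightarrow> harmonic_on F S \<and>
     (\<forall>z\<in>S. pdx F z \<bullet> pdx F z = pdy F z \<bullet> pdy F z \<and> pdx F z \<bullet> pdy F z = 0
            \<and> pdx F z \<noteq> 0)"

end

theory Submission
  imports Defs
begin

lemma second_deriv_test:
  fixes h h' :: "real \<Rightarrow> real"
  assumes d1: "\<forall>\<^sub>F t in nhds 0. (h has_real_derivative h' t) (at t)"
    and d2: "(h' has_real_derivative c) (at 0)"
    and mx: "\<forall>\<^sub>F t in nhds 0. h t \<le> h 0"
  shows "c \<le> 0"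
proof (rule ccontr)
  assume "\<not> c \<le> 0" hence c: "c > 0" by simp
  from d1 mx have "\<forall>\<^sub>F t in nhds 0. (h has_real_derivative h' t) (at t) \<and> h t \<le> h 0"
    by (rule eventually_conj)
  then obtain r where r: "r > 0" "\<And>t. \<bar>t\<bar> < r \<Longrightarrow> (h has_real_derivative h' t) (at t) \<and> h t \<le> h 0"
    unfolding eventually_nhds_metric dist_real_def by force
  have h0: "h' 0 = 0"
    using DERIV_local_max[where f=h and x=0 and l="h' 0" and d=r] r by force
  from d2 have "((\<lambda>y. (h' y - h' 0) / (y - 0)) \<longlongrightarrow> c) (at 0)"
    by (simp add: has_field_derivative_iff)
  hence "((\<lambda>y. h' y / y) \<longlongrightarrow> c) (at_right 0)"
    using h0 by (simp add: filterlim_at_split)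
  hence "\<forall>\<^sub>F y in at_right 0. h' y / y > 0" using c by (simp add: order_tendstoD(1))
  then obtain s where s: "s > 0" "\<And>y. 0 < y \<Longrightarrow> y < s \<Longrightarrow> h' y / y > 0"
    unfolding eventually_at_right_field by auto
  define t where "t = min (s/2) (r/2)"
  have t: "0 < t" "t < s" "t < r" using s r by (auto simp: t_def)
  obtain z where z: "0 < z" "z < t" "h t - h 0 = (t - 0) * h' z"
    using MVT2[of 0 t h h'] t r by force
  have "h' z / z > 0" using s z t by auto
  hence "h' z > 0" using z by (simp add: zero_less_divide_iff)
  hence "h t > h 0" using z t by (simp add: algebra_simps)
  moreover have "h t \<le> h 0" using r(2)[of t] t by simp
  ultimately show False by simp
qed

lemma inner_vderiv:
  fixes g k :: "real \<Rightarrow> 'a::real_inner"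
  assumes "(g has_vector_derivative v) (at t)" "(k has_vector_derivative w) (at t)"
  shows "((\<lambda>t. g t \<bullet> k t) has_real_derivative (g t \<bullet> w + v \<bullet> k t)) (at t)"
proof -
  have "((\<lambda>t. g t \<bullet> k t) has_derivative (\<lambda>x. g t \<bullet> (x *\<^sub>R w) + (x *\<^sub>R v) \<bullet> k t)) (at t)"
    using assms unfolding has_vector_derivative_def by (intro has_derivative_inner) auto
  thus ?thesis unfolding has_field_derivative_def
    by (rule has_derivative_eq_rhs) (auto simp: algebra_simps)
qed

lemma line_test:
  fixes g g1 :: "real \<Rightarrow> 'a::real_inner" and psi psi1 :: "real \<Rightarrow> real"
  assumes dg: "\<forall>\<^sub>F t in nhds 0. (g has_vector_derivative g1 t) (at t)"
    and dg1: "(g1 has_vector_derivative g2) (at 0)"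
    and g0: "g 0 \<noteq> 0"
    and dpsi: "\<forall>\<^sub>F t in nhds 0. (psi has_real_derivative psi1 t) (at t)"
    and dpsi1: "(psi1 has_real_derivative c) (at 0)"
    and mx: "\<forall>\<^sub>F t in nhds 0. ln (g t \<bullet> g t) + psi t \<le> ln (g 0 \<bullet> g 0) + psi 0"
  shows "(2*(g1 0 \<bullet> g1 0) + 2*(g 0 \<bullet> g2))/(g 0 \<bullet> g 0)
          - (2*(g 0 \<bullet> g1 0))^2/(g 0 \<bullet> g 0)^2 + c \<le> 0"
proof -
  have dg0: "(g has_vector_derivative g1 0) (at 0)" using dg eventually_nhds_x_imp_x by blast
  have "isCont (\<lambda>t. g t \<bullet> g t) 0"
    using has_vector_derivative_continuous[OF dg0] by (intro continuous_intros)
  hence "((\<lambda>t. g t \<bullet> g t) \<longlongrightarrow> g 0 \<bullet> g 0) (at 0)" by (simp add: isCont_def)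
  moreover have "g 0 \<bullet> g 0 > 0" using g0 by simp
  ultimately have "\<forall>\<^sub>F t in at 0. g t \<bullet> g t > 0" by (rule order_tendstoD(1))
  hence pos: "\<forall>\<^sub>F t in nhds 0. g t \<bullet> g t > 0" using g0 by (simp add: eventually_nhds_conv_at)
  define h where "h t = ln (g t \<bullet> g t) + psi t" for t
  define h' where "h' t = 2*(g t \<bullet> g1 t)/(g t \<bullet> g t) + psi1 t" for t
  have "\<forall>\<^sub>F t in nhds 0. (h has_real_derivative h' t) (at t)"
    using dg dpsi pos
  proof eventually_elim
    case (elim t)
    have "((\<lambda>t. g t \<bullet> g t) has_real_derivative (g t \<bullet> g1 t + g1 t \<bullet> g t)) (at t)"
      using elim by (intro inner_vderiv) auto
    hence "(h has_real_derivative ((g t \<bullet> g1 t + g1 t \<bullet> g t) / (g t \<bullet> g t) + psi1 t)) (at t)"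
      unfolding h_def using elim by (auto intro!: derivative_eq_intros)
    thus ?case unfolding h'_def by (simp add: inner_commute)
  qed
  moreover have "(h' has_real_derivative
      ((g1 0 \<bullet> g1 0 + g 0 \<bullet> g2) * 2 * (g 0 \<bullet> g 0) - 2*(g 0 \<bullet> g1 0) * (g 0 \<bullet> g1 0 + g1 0 \<bullet> g 0)) / (g 0 \<bullet> g 0)^2 + c) (at 0)"
  proof -
    have a: "((\<lambda>t. g t \<bullet> g1 t) has_real_derivative (g 0 \<bullet> g2 + g1 0 \<bullet> g1 0)) (at 0)"
      using dg0 dg1 by (rule inner_vderiv)
    have b: "((\<lambda>t. g t \<bullet> g t) has_real_derivative (g 0 \<bullet> g1 0 + g1 0 \<bullet> g 0)) (at 0)"
      using dg0 dg0 by (rule inner_vderiv)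
    show ?thesis unfolding h'_def
      using a b dpsi1 g0
      by (auto intro!: derivative_eq_intros simp: power2_eq_square algebra_simps)
  qed
  moreover have "\<forall>\<^sub>F t in nhds 0. h t \<le> h 0" using mx unfolding h_def .
  ultimately have "((g1 0 \<bullet> g1 0 + g 0 \<bullet> g2) * 2 * (g 0 \<bullet> g 0) - 2*(g 0 \<bullet> g1 0) * (g 0 \<bullet> g1 0 + g1 0 \<bullet> g 0)) / (g 0 \<bullet> g 0)^2 + c \<le> 0"
    by (rule second_deriv_test)
  moreover have "((g1 0 \<bullet> g1 0 + g 0 \<bullet> g2) * 2 * (g 0 \<bullet> g 0) - 2*(g 0 \<bullet> g1 0) * (g 0 \<bullet> g1 0 + g1 0 \<bullet> g 0)) / (g 0 \<bullet> g 0)^2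
     = (2*(g1 0 \<bullet> g1 0) + 2*(g 0 \<bullet> g2))/(g 0 \<bullet> g 0) - (2*(g 0 \<bullet> g1 0))^2/(g 0 \<bullet> g 0)^2"
    using g0 by (simp add: field_simps power2_eq_square inner_commute)
  ultimately show ?thesis by simp
qed

lemma line_deriv:
  fixes G :: "complex \<Rightarrow> 'a::real_normed_vector"
  assumes "G differentiable (at (p + of_real t * v))"
  shows "((\<lambda>t. G (p + of_real t * v)) has_vector_derivative
            frechet_derivative G (at (p + of_real t * v)) v) (at t)"
proof -
  have l: "((\<lambda>t. p + of_real t * v) has_derivative (\<lambda>s. of_real s * v)) (at t)"
    by (auto intro!: derivative_eq_intros)
  have g: "(G has_derivative frechet_derivative G (at (p + of_real t * v))) (at (p + of_real t * v))"
    using assms frechet_derivative_works by blast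
  have bl: "linear (frechet_derivative G (at (p + of_real t * v)))"
    using g has_derivative_linear by blast
  have "((\<lambda>t. G (p + of_real t * v)) has_derivative
     (\<lambda>s. frechet_derivative G (at (p + of_real t * v)) (of_real s * v))) (at t)"
    using has_derivative_compose[OF l g] .
  moreover have "\<And>s. frechet_derivative G (at (p + of_real t * v)) (of_real s * v)
      = s *\<^sub>R frechet_derivative G (at (p + of_real t * v)) v"
    using linear_scale[OF bl] by (metis scaleR_conv_of_real)
  ultimately show ?thesis unfolding has_vector_derivative_def by simp
qed

lemma bessel2:
  fixes F a b :: "'a::real_inner"
  assumes "a \<bullet> a = b \<bullet> b" "a \<bullet> b = 0"
  shows "(F \<bullet> a)^2 + (F \<bullet> b)^2 \<le> (a \<bullet> a) * (F \<bullet> F)"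
proof (cases "a \<bullet> a = 0")
  case True
  hence "a = 0" "b = 0" using assms by auto
  thus ?thesis by simp
next
  case False
  define s where "s = a \<bullet> a"
  have s: "s > 0" using False s_def by (simp add: order_le_less)
  have "0 \<le> (s *\<^sub>R F - (F \<bullet> a) *\<^sub>R a - (F \<bullet> b) *\<^sub>R b) \<bullet> (s *\<^sub>R F - (F \<bullet> a) *\<^sub>R a - (F \<bullet> b) *\<^sub>R b)"
    by simp
  also have "\<dots> = s * (s * (F \<bullet> F) - ((F \<bullet> a)^2 + (F \<bullet> b)^2))"
    using assms unfolding s_def
    by (simp add: inner_diff_left inner_diff_right inner_commute power2_eq_square algebra_simps)
  finally have "0 \<le> s * (F \<bullet> F) - ((F \<bullet> a)^2 + (F \<bullet> b)^2)" using s
    by (simp add: zero_le_mult_iff)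
  thus ?thesis unfolding s_def by simp
qed

definition Qf :: "real \<Rightarrow> real \<Rightarrow> real \<Rightarrow> real" where
  "Qf d e s = -(1-d) * ln s + e * s"

lemma ev_pos_nhds:
  fixes f :: "real \<Rightarrow> real"
  assumes "isCont f 0" "f 0 > 0"
  shows "\<forall>\<^sub>F t in nhds 0. f t > 0"
proof -
  have "(f \<longlongrightarrow> f 0) (at 0)" using assms by (simp add: isCont_def)
  hence "\<forall>\<^sub>F t in at 0. f t > 0" using assms(2) by (rule order_tendstoD(1))
  thus ?thesis using assms(2) by (simp add: eventually_nhds_conv_at)
qed

lemma Q_line1:
  assumes "a^2 + b^2 > 0"
  shows "\<forall>\<^sub>F t in nhds 0. ((\<lambda>t. Qf d e ((a+t)^2+b^2)) has_real_derivative
     (-(1-d)*(2*(a+t))/((a+t)^2+b^2) + e*(2*(a+t)))) (at t)"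
proof -
  have "\<forall>\<^sub>F t in nhds 0. (a+t)^2+b^2 > 0"
    using assms by (intro ev_pos_nhds) (auto intro!: continuous_intros)
  thus ?thesis
  proof eventually_elim
    case (elim t)
    have "0 < (a+t)^2+b^2 \<Longrightarrow> ((\<lambda>t. Qf d e ((a+t)^2+b^2)) has_real_derivative
       (-(1-d)*(2*(a+t))/((a+t)^2+b^2) + e*(2*(a+t)))) (at t)"
      unfolding Qf_def by (rule derivative_eq_intros refl | simp)+
    thus ?case using elim by blast
  qed
qed

lemma Q_line2:
  assumes "a^2 + b^2 > 0"
  shows "((\<lambda>t. -(1-d)*(2*(a+t))/((a+t)^2+b^2) + e*(2*(a+t))) has_real_derivative
     (-(1-d)*(2*(a^2+b^2) - 4*a^2)/(a^2+b^2)^2 + 2*e)) (at 0)"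
  using assms
  by (auto intro!: derivative_eq_intros simp: field_simps power2_eq_square)

lemma lim_le_right:
  fixes g :: "real \<Rightarrow> real"
  assumes "a < b" "\<And>x. a < x \<Longrightarrow> x < b \<Longrightarrow> P \<le> g x" "isCont g a"
  shows "P \<le> g a"
proof -
  have "(g \<longlongrightarrow> g a) (at_right a)" using assms(3)
    by (simp add: isCont_def filterlim_at_split)
  moreover have "\<forall>\<^sub>F x in at_right a. P \<le> g x"
    using assms(1,2) unfolding eventually_at_right_field by (intro exI[of _ b]) auto
  ultimately show ?thesis by (intro tendsto_lowerbound) auto
qed

lemma lim_le_left:
  fixes g :: "real \<Rightarrow> real"
  assumes "a < b" "\<And>x. a < x \<Longrightarrow> x < b \<Longrightarrow> P \<le> g x" "isCont g b"
  shows "P \<le> g b"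
proof -
  have "(g \<longlongrightarrow> g b) (at_left b)" using assms(3)
    by (simp add: isCont_def filterlim_at_split)
  moreover have "\<forall>\<^sub>F x in at_left b. P \<le> g x"
    using assms(1,2) unfolding eventually_at_left_field by (intro exI[of _ a]) auto
  ultimately show ?thesis by (intro tendsto_lowerbound) auto
qed

lemma small_lim:
  assumes "d > 0"
  shows "((\<lambda>r::real. exp (d * ln (r^2))) \<longlongrightarrow> 0) (at_right 0)"
proof -
  have "filterlim (\<lambda>r. (2*d) * ln r) at_bot (at_right (0::real))"
    using assms by (intro filterlim_tendsto_pos_mult_at_bot[OF tendsto_const _ ln_at_0]) auto
  hence l: "((\<lambda>r. exp ((2*d) * ln r)) \<longlongrightarrow> 0) (at_right (0::real))"
    by (rule filterlim_compose[OF exp_at_bot])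
  have "\<forall>\<^sub>F r in at_right (0::real). exp ((2*d) * ln r) = exp (d * ln (r^2))"
    unfolding eventually_at_right_field by (intro exI[of _ 1]) (auto simp: ln_realpow)
  thus ?thesis using l by (rule tendsto_cong[THEN iffD1])
qed

lemma dir_test:
  fixes F G1 :: "complex \<Rightarrow> 'a::real_inner"
  assumes S: "open S" "p \<in> S" and dF: "\<forall>\<zeta>\<in>S. F differentiable (at \<zeta>)"
    and G1: "\<And>\<zeta>. G1 \<zeta> = frechet_derivative F (at \<zeta>) v"
    and dG1: "G1 differentiable (at p)" and Fp: "F p \<noteq> 0" and v: "norm v = 1"
    and dpsi: "\<forall>\<^sub>F t in nhds 0. ((\<lambda>t. Qf d e (norm (p + of_real t * v)^2)) has_real_derivative psi1 t) (at t)"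
    and dpsi1: "(psi1 has_real_derivative c) (at 0)"
    and mx: "\<forall>\<^sub>F \<zeta> in nhds p. F \<zeta> \<noteq> 0 \<and> F \<zeta> \<bullet> F \<zeta> * exp (Qf d e (norm \<zeta>^2)) \<le> F p \<bullet> F p * exp (Qf d e (norm p^2))"
  shows "(2*(G1 p \<bullet> G1 p) + 2*(F p \<bullet> frechet_derivative G1 (at p) v))/(F p \<bullet> F p)
          - (2*(F p \<bullet> G1 p))^2/(F p \<bullet> F p)^2 + c \<le> 0"
proof -
  have "\<forall>\<^sub>F \<zeta> in nhds p. \<zeta> \<in> S" using S eventually_nhds_in_open by blast
  with mx have "\<forall>\<^sub>F \<zeta> in nhds p. \<zeta> \<in> S \<and> F \<zeta> \<noteq> 0 \<and> F \<zeta> \<bullet> F \<zeta> * exp (Qf d e (norm \<zeta>^2)) \<le> F p \<bullet> F p * exp (Qf d e (norm p^2))"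
    by (simp add: eventually_conj_iff)
  then obtain r where r: "r > 0" "\<And>\<zeta>. dist \<zeta> p < r \<Longrightarrow> \<zeta> \<in> S \<and> F \<zeta> \<noteq> 0 \<and> F \<zeta> \<bullet> F \<zeta> * exp (Qf d e (norm \<zeta>^2)) \<le> F p \<bullet> F p * exp (Qf d e (norm p^2))"
    unfolding eventually_nhds_metric by blast
  have evr: "\<forall>\<^sub>F t in nhds (0::real). \<bar>t\<bar> < r"
    using r(1) unfolding eventually_nhds_metric by (intro exI[of _ r]) (auto simp: dist_real_def)
  have distt: "dist (p + of_real t * v) p = \<bar>t\<bar>" for t
    using v by (simp add: dist_norm norm_mult)
  define g where "g t = F (p + of_real t * v)" for t
  define g1 where "g1 t = G1 (p + of_real t * v)" for t
  have dg: "\<forall>\<^sub>F t in nhds 0. (g has_vector_derivative g1 t) (at t)"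
    using evr
  proof eventually_elim
    case (elim t)
    hence "p + of_real t * v \<in> S" using r(2) distt by auto
    hence "F differentiable (at (p + of_real t * v))" using dF by auto
    from line_deriv[OF this] show ?case unfolding g_def g1_def G1 .
  qed
  have dg1: "(g1 has_vector_derivative frechet_derivative G1 (at p) v) (at 0)"
    using line_deriv[of G1 p 0 v] dG1 unfolding g1_def by simp
  have mx': "\<forall>\<^sub>F t in nhds 0. ln (g t \<bullet> g t) + Qf d e (norm (p + of_real t * v)^2)
        \<le> ln (g 0 \<bullet> g 0) + Qf d e (norm (p + of_real 0 * v)^2)"
    using evr
  proof eventually_elim
    case (elim t)
    let ?z = "p + of_real t * v"
    have h: "F ?z \<noteq> 0 \<and> F ?z \<bullet> F ?z * exp (Qf d e (norm ?z^2)) \<le> F p \<bullet> F p * exp (Qf d e (norm p^2))"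
      using r(2) distt elim by auto
    have pos1: "F ?z \<bullet> F ?z > 0" using h by simp
    have pos2: "F p \<bullet> F p > 0" using Fp by simp
    have "ln (F ?z \<bullet> F ?z * exp (Qf d e (norm ?z^2))) \<le> ln (F p \<bullet> F p * exp (Qf d e (norm p^2)))"
      using h pos1 pos2 by simp
    thus ?case using pos1 pos2 unfolding g_def by (simp add: ln_mult)
  qed
  show ?thesis
    using line_test[OF dg dg1 _ dpsi dpsi1 mx'] Fp unfolding g_def g1_def by simp
qed

lemma final_arith:
  fixes f aa Fa Fb FA FB cx cy e :: real
  assumes f: "f > 0" and ix: "(2*aa + 2*FA)/f - (2*Fa)^2/f^2 + cx \<le> 0"
    and iy: "(2*aa + 2*FB)/f - (2*Fb)^2/f^2 + cy \<le> 0"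
    and AB: "FA + FB = 0" and c: "cx + cy = 4*e" and e: "e > 0"
    and bes: "Fa^2 + Fb^2 \<le> aa * f"
  shows False
proof -
  have "(2*aa + 2*FA)/f + (2*aa + 2*FB)/f = 4*aa/f"
  proof -
    have "FB = -FA" using AB by linarith
    thus ?thesis using f by (simp add: field_simps)
  qed
  moreover have "(2*Fa)^2/f^2 + (2*Fb)^2/f^2 = 4*(Fa^2+Fb^2)/f^2"
    by (simp add: add_divide_distrib power2_eq_square algebra_simps)
  moreover have "4*(Fa^2+Fb^2)/f^2 \<le> 4*(aa*f)/f^2"
    using bes f by (intro divide_right_mono) auto
  moreover have "4*(aa*f)/f^2 = 4*aa/f" using f by (simp add: power2_eq_square)
  ultimately show False using ix iy c e by linarith
qed

lemma no_interior_max: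
  fixes F :: "complex \<Rightarrow> 'a::real_inner"
  assumes cmi: "conformal_minimal_immersion_on F (ball 0 1)"
    and p: "p \<in> ball 0 1" "p \<noteq> 0" and Fp: "F p \<noteq> 0" and e: "0 < e"
    and mx: "\<forall>\<^sub>F \<zeta> in nhds p. F \<zeta> \<bullet> F \<zeta> * exp (Qf d e (norm \<zeta>^2)) \<le> F p \<bullet> F p * exp (Qf d e (norm p^2))"
  shows False
proof -
  have H: "harmonic_on F (ball 0 1)" and conf: "\<forall>z\<in>ball 0 1. pdx F z \<bullet> pdx F z = pdy F z \<bullet> pdy F z \<and> pdx F z \<bullet> pdy F z = 0"
    using cmi unfolding conformal_minimal_immersion_on_def by auto
  have dF: "\<forall>\<zeta>\<in>ball 0 1. F differentiable (at \<zeta>)"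
    using H unfolding harmonic_on_def by (simp add: differentiable_on_eq_differentiable_at)
  have dFx: "pdx F differentiable (at p)" and dFy: "pdy F differentiable (at p)"
    using H p unfolding harmonic_on_def by (auto simp: differentiable_on_eq_differentiable_at)
  have lap: "pdx (pdx F) p + pdy (pdy F) p = 0" using H p unfolding harmonic_on_def by auto
  have "isCont F p" using dF p by (simp add: differentiable_imp_continuous_within)
  hence "(F \<longlongrightarrow> F p) (at p)" by (simp add: isCont_def)
  hence "\<forall>\<^sub>F \<zeta> in at p. F \<zeta> \<noteq> 0" using Fp by (rule tendsto_imp_eventually_ne)
  hence "\<forall>\<^sub>F \<zeta> in nhds p. F \<zeta> \<noteq> 0" using Fp by (simp add: eventually_nhds_conv_at)
  with mx have mx2: "\<forall>\<^sub>F \<zeta> in nhds p. F \<zeta> \<noteq> 0 \<and> F \<zeta> \<bullet> F \<zeta> * exp (Qf d e (norm \<zeta>^2)) \<le> F p \<bullet> F p * exp (Qf d e (norm p^2))"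
    by (simp add: eventually_conj_iff)
  have q: "Re p ^ 2 + Im p ^ 2 > 0" using p(2)
    by (simp add: cmod_power2[symmetric])
  have q': "Im p ^ 2 + Re p ^ 2 > 0" using q by (simp add: add.commute)
  define cx where "cx = -(1-d)*(2*(Re p^2 + Im p^2) - 4*Re p^2)/(Re p^2 + Im p^2)^2 + 2*e"
  define cy where "cy = -(1-d)*(2*(Im p^2 + Re p^2) - 4*Im p^2)/(Im p^2 + Re p^2)^2 + 2*e"
  have nx: "\<And>t. norm (p + of_real t * 1)^2 = (Re p + t)^2 + Im p^2"
    by (simp add: cmod_power2)
  have ny: "\<And>t. norm (p + of_real t * \<i>)^2 = (Im p + t)^2 + Re p^2"
    by (simp add: cmod_power2)
  have ix: "(2*(pdx F p \<bullet> pdx F p) + 2*(F p \<bullet> pdx (pdx F) p))/(F p \<bullet> F p)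
          - (2*(F p \<bullet> pdx F p))^2/(F p \<bullet> F p)^2 + cx \<le> 0"
    using dir_test[of "ball 0 1" p F "pdx F" 1 d e _ cx, OF open_ball p(1) dF _ dFx Fp _ _ _ mx2]
      Q_line1[OF q, of d e] Q_line2[OF q, of d e]
    unfolding nx cx_def by (simp add: pdx_def)
  have iy: "(2*(pdy F p \<bullet> pdy F p) + 2*(F p \<bullet> pdy (pdy F) p))/(F p \<bullet> F p)
          - (2*(F p \<bullet> pdy F p))^2/(F p \<bullet> F p)^2 + cy \<le> 0"
    using dir_test[of "ball 0 1" p F "pdy F" \<i> d e _ cy, OF open_ball p(1) dF _ dFy Fp _ _ _ mx2]
      Q_line1[OF q', of d e] Q_line2[OF q', of d e]
    unfolding ny cy_def by (simp add: pdy_def)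
  have c: "cx + cy = 4*e"
  proof -
    have sw: "Im p^2 + Re p^2 = Re p^2 + Im p^2" by simp
    have "\<And>X Y Q. -(1-d)*(2*(X+Y) - 4*X)/Q + -(1-d)*(2*(X+Y) - 4*Y)/Q
        = -(1-d)*((2*(X+Y) - 4*X) + (2*(X+Y) - 4*Y))/Q"
      by (simp only: add_divide_distrib[symmetric] distrib_left[symmetric])
    hence "\<And>X Y Q. -(1-d)*(2*(X+Y) - 4*X)/Q + -(1-d)*(2*(X+Y) - 4*Y)/Q = 0"
      by (simp add: algebra_simps)
    thus ?thesis unfolding cx_def cy_def sw
      by (smt (verit))
  qed
  have AB: "F p \<bullet> pdx (pdx F) p + F p \<bullet> pdy (pdy F) p = 0"
    using lap by (metis inner_add_right inner_zero_right)
  have bes: "(F p \<bullet> pdx F p)^2 + (F p \<bullet> pdy F p)^2 \<le> (pdx F p \<bullet> pdx F p) * (F p \<bullet> F p)"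
    using conf p by (intro bessel2) auto
  have eqab: "pdy F p \<bullet> pdy F p = pdx F p \<bullet> pdx F p" using conf p by auto
  show False
    using final_arith[OF _ ix iy[unfolded eqab] AB c e bes] Fp by simp
qed

lemma key:
  fixes F :: "complex \<Rightarrow> 'a::real_inner"
  assumes cmi: "conformal_minimal_immersion_on F (ball 0 1)"
    and inb: "\<forall>z\<in>ball 0 1. F z \<in> ball 0 1" and F0: "F 0 = 0"
    and zR: "norm z < R" "R < 1" and Fz: "F z \<noteq> 0" and d: "0 < d" "d < 1" and e: "0 < e"
  shows "F z \<bullet> F z * exp (Qf d e (norm z ^ 2)) \<le> exp (Qf d e (R^2))"
proof -
  have H: "harmonic_on F (ball 0 1)"
    using cmi unfolding conformal_minimal_immersion_on_def by auto
  have dFon: "F differentiable_on ball 0 1" using H unfolding harmonic_on_def by auto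
  have dF: "\<forall>\<zeta>\<in>ball 0 1. F differentiable (at \<zeta>)"
    using dFon by (simp add: differentiable_on_eq_differentiable_at)
  have z0: "z \<noteq> 0" using Fz F0 by auto
  define w where "w \<zeta> = F \<zeta> \<bullet> F \<zeta> * exp (Qf d e (norm \<zeta>^2))" for \<zeta>
  have wz: "w z > 0" using Fz by (simp add: w_def)
  have "(F has_derivative frechet_derivative F (at 0)) (at 0)"
    using dF frechet_derivative_works[of F "at 0"] by simp
  then obtain D where D: "(F has_derivative D) (at 0)" by blast
  then have bl: "bounded_linear D" by (rule has_derivative_bounded_linear)
  obtain K where K: "K > 0" "\<And>x. norm (D x) \<le> norm x * K"
    using bounded_linear.pos_bounded[OF bl] by blast
  from D obtain d0 where d0: "d0 > 0" "\<And>y. norm (y - 0) < d0 \<Longrightarrow> norm (F y - F 0 - D (y - 0)) \<le> 1 * norm (y - 0)"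
    unfolding has_derivative_at_alt by (meson zero_less_one)
  define C where "C = K + 1"
  have Fbound: "norm (F y) \<le> C * norm y" if "norm y < d0" for y
  proof -
    have "norm (F y) \<le> norm (F y - D y) + norm (D y)"
      using norm_triangle_ineq[of "F y - D y" "D y"] by simp
    also have "\<dots> \<le> norm y + norm y * K" using d0(2)[of y] that K(2)[of y] F0 by simp
    finally show ?thesis by (simp add: C_def algebra_simps)
  qed
  have C: "C > 0" using K by (simp add: C_def)
  have "((\<lambda>r. C^2 * exp e * exp (d * ln (r^2))) \<longlongrightarrow> C^2 * exp e * 0) (at_right 0)"
    by (intro tendsto_mult tendsto_const small_lim d)
  hence "\<forall>\<^sub>F r in at_right 0. C^2 * exp e * exp (d * ln (r^2)) < w z"
    using wz by (intro order_tendstoD(2)) auto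
  then obtain b where b: "b > 0" "\<And>r. 0 < r \<Longrightarrow> r < b \<Longrightarrow> C^2 * exp e * exp (d * ln (r^2)) < w z"
    unfolding eventually_at_right_field by auto
  define \<rho> where "\<rho> = min (min b d0) (min (norm z) 1) / 2"
  have \<rho>: "0 < \<rho>" "\<rho> < b" "\<rho> < d0" "\<rho> < norm z" "\<rho> < 1"
  proof -
    have "norm z > 0" using z0 by simp
    thus "0 < \<rho>" "\<rho> < b" "\<rho> < d0" "\<rho> < norm z" "\<rho> < 1"
      using b(1) d0(1) unfolding \<rho>_def by linarith+
  qed
  have inner: "w \<zeta> < w z" if nz: "norm \<zeta> = \<rho>" for \<zeta>
  proof -
    have "norm (F \<zeta>) \<le> C * \<rho>" using Fbound[of \<zeta>] nz \<rho> by simp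
    hence "norm (F \<zeta>)^2 \<le> (C * \<rho>)^2" by (intro power_mono) auto
    hence f1: "F \<zeta> \<bullet> F \<zeta> \<le> C^2 * \<rho>^2" by (simp add: power2_norm_eq_inner power_mult_distrib)
    have el: "exp (ln (\<rho>^2)) = \<rho>^2" using \<rho> by simp
    have "\<rho>^2 * exp (Qf d e (\<rho>^2)) = exp (ln (\<rho>^2)) * exp (-(1-d) * ln (\<rho>^2) + e * \<rho>^2)"
      unfolding Qf_def el ..
    also have "\<dots> = exp (d * ln (\<rho>^2)) * exp (e * \<rho>^2)"
      unfolding exp_add[symmetric] by (simp add: algebra_simps)
    finally have e1: "\<rho>^2 * exp (Qf d e (\<rho>^2)) = exp (d * ln (\<rho>^2)) * exp (e * \<rho>^2)" .
    have "\<rho>^2 \<le> 1" using \<rho> by (simp add: power_le_one)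
    hence "e * \<rho>^2 \<le> e" using e by (simp add: mult_left_le)
    hence e2: "exp (e * \<rho>^2) \<le> exp e" by simp
    have "w \<zeta> = F \<zeta> \<bullet> F \<zeta> * exp (Qf d e (\<rho>^2))" unfolding w_def nz ..
    also have "\<dots> \<le> C^2 * \<rho>^2 * exp (Qf d e (\<rho>^2))" using f1 by (intro mult_right_mono) auto
    also have "\<dots> = C^2 * exp (d * ln (\<rho>^2)) * exp (e * \<rho>^2)" using e1 by (simp add: algebra_simps)
    also have "\<dots> \<le> C^2 * exp (d * ln (\<rho>^2)) * exp e" using e2 by (intro mult_left_mono) auto
    also have "\<dots> = C^2 * exp e * exp (d * ln (\<rho>^2))" by simp
    also have "\<dots> < w z" using b(2)[of \<rho>] \<rho> by simp
    finally show ?thesis .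
  qed
  define KK where "KK = cball (0::complex) R \<inter> - ball 0 \<rho>"
  have cKK: "compact KK" unfolding KK_def
    by (intro compact_Int_closed compact_cball closed_Compl open_ball)
  have zK: "z \<in> KK" using zR \<rho> by (auto simp: KK_def)
  have sub: "KK \<subseteq> ball 0 1 - {0}" using zR \<rho> by (auto simp: KK_def)
  have contF: "continuous_on (ball 0 1 - {0}) F"
    using differentiable_imp_continuous_on[OF dFon] by (rule continuous_on_subset) auto
  have "continuous_on (ball 0 1 - {0}) w"
    unfolding w_def Qf_def using contF by (intro continuous_intros) auto
  hence cw: "continuous_on KK w" using sub by (rule continuous_on_subset)
  obtain p where p: "p \<in> KK" "\<And>y. y \<in> KK \<Longrightarrow> w y \<le> w p"
    using continuous_attains_sup[OF cKK _ cw] zK by blast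
  have wp: "w p \<ge> w z" using p zK by auto
  have Fp: "F p \<noteq> 0" using wp wz by (auto simp: w_def)
  have pb: "\<rho> \<le> norm p" "norm p \<le> R" using p(1) by (auto simp: KK_def)
  show ?thesis
  proof (cases "norm p = R")
    case True
    have "p \<in> ball 0 1" using True zR by simp
    hence "norm (F p) < 1" using inb by auto
    hence "norm (F p)^2 \<le> 1" by (simp add: power_le_one)
    hence "F p \<bullet> F p \<le> 1" by (simp add: power2_norm_eq_inner)
    hence "w p \<le> exp (Qf d e (R^2))" unfolding w_def True by (simp add: mult_left_le_one_le)
    thus ?thesis using wp unfolding w_def by simp
  next
    case False
    show ?thesis
    proof (cases "norm p = \<rho>")
      case True
      thus ?thesis using inner[of p] wp by simp
    next
      case False2: False
      have lt: "\<rho> < norm p" "norm p < R" using pb False False2 by auto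
      define r where "r = min (norm p - \<rho>) (R - norm p)"
      have r: "r > 0" using lt by (simp add: r_def)
      have "\<forall>\<^sub>F y in nhds p. w y \<le> w p"
        unfolding eventually_nhds_metric
      proof (intro exI[of _ r] conjI allI impI)
        fix y assume "dist y p < r"
        hence "norm (y - p) < r" by (simp add: dist_norm)
        moreover have "norm y \<le> norm p + norm (y - p)" "norm p \<le> norm y + norm (y - p)"
          using norm_triangle_ineq2[of y p] norm_triangle_ineq3[of y p] by (auto simp: norm_minus_commute)
        ultimately have "y \<in> KK" unfolding KK_def r_def by auto
        thus "w y \<le> w p" by (rule p(2))
      qed (use r in auto)
      moreover have "p \<in> ball 0 1" "p \<noteq> 0" using lt zR \<rho> by auto
      ultimately have False using no_interior_max[OF cmi _ _ Fp e] unfolding w_def by blast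
      thus ?thesis ..
    qed
  qed
qed

lemma schwarz:
  fixes F :: "complex \<Rightarrow> 'a::real_inner"
  assumes cmi: "conformal_minimal_immersion_on F (ball 0 1)"
    and inb: "\<forall>z\<in>ball 0 1. F z \<in> ball 0 1" and F0: "F 0 = 0"
    and z: "norm z < 1"
  shows "norm (F z) \<le> norm z"
proof (cases "F z = 0")
  case True thus ?thesis by simp
next
  case False
  have z0: "z \<noteq> 0" using False F0 by auto
  define f where "f = F z \<bullet> F z"
  define s where "s = norm z ^ 2"
  have s: "s > 0" using z0 by (simp add: s_def)
  have k: "f \<le> exp (Qf d e (R^2) - Qf d e s)"
    if "0 < d" "d < 1" "0 < e" "norm z < R" "R < 1" for d e R
  proof -
    have "f * exp (Qf d e s) \<le> exp (Qf d e (R^2))"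
      using key[OF cmi inb F0 that(4,5) False that(1,2,3)] by (simp add: f_def s_def)
    thus ?thesis by (simp add: exp_diff pos_le_divide_eq)
  qed
  have k1: "f \<le> exp (Qf d 0 (R^2) - Qf d 0 s)"
    if "0 < d" "d < 1" "norm z < R" "R < 1" for d R
  proof -
    have "f \<le> (\<lambda>e. exp (Qf d e (R^2) - Qf d e s)) 0"
      by (rule lim_le_right[of 0 1]) (use k that in \<open>auto simp: Qf_def intro!: continuous_intros\<close>)
    thus ?thesis by simp
  qed
  have k2: "f \<le> exp (Qf d 0 1 - Qf d 0 s)" if "0 < d" "d < 1" for d
  proof -
    have "f \<le> (\<lambda>R. exp (Qf d 0 (R^2) - Qf d 0 s)) 1"
      by (rule lim_le_left[of "norm z" 1]) (use z k1 that in \<open>auto simp: Qf_def intro!: continuous_intros\<close>)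
    thus ?thesis by simp
  qed
  have "f \<le> (\<lambda>d. exp (Qf d 0 1 - Qf d 0 s)) 0"
    by (rule lim_le_right[of 0 1]) (use k2 in \<open>auto simp: Qf_def intro!: continuous_intros\<close>)
  hence "f \<le> s" using s by (simp add: Qf_def)
  hence "norm (F z)^2 \<le> norm z ^ 2" by (simp add: f_def s_def power2_norm_eq_inner)
  thus ?thesis by (rule power2_le_imp_le) simp
qed

theorem theorem1p3:
  fixes F :: "complex \<Rightarrow> real ^ 'n" and z0 :: complex and L :: "complex \<Rightarrow> real ^ 'n"
  assumes "CARD('n) \<ge> 3"
    and "conformal_minimal_immersion_on F (ball 0 1)"
    and "\<forall>z\<in>ball 0 1. F z \<in> ball 0 1"
    and "F 0 = 0"
    and "norm z0 = 1"
    and "F z0 \<in> sphere 0 1"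
    and "continuous (at z0 within insert z0 (ball 0 1)) F"
    and "(F has_derivative L) (at z0 within insert z0 (ball 0 1))"
  shows "onorm L \<ge> 1"
proof -
  note cmi = assms(2) and inb = assms(3) and F0 = assms(4) and nz0 = assms(5)
  have nF: "norm (F z0) = 1" using assms(6) by simp
  have bl: "bounded_linear L" and der: "\<forall>e>0. \<exists>d>0. \<forall>y\<in>insert z0 (ball 0 1). norm (y - z0) < d \<longrightarrow>
      norm (F y - F z0 - L (y - z0)) \<le> e * norm (y - z0)"
    using assms(8) unfolding has_derivative_within_alt by auto
  define N where "N = norm (L z0)"
  have "N \<ge> 1"
  proof (rule ccontr)
    assume "\<not> N \<ge> 1" hence N1: "N < 1" by simp
    define e where "e = (1 - N) / 2"
    have e: "e > 0" using N1 by (simp add: e_def)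
    then obtain d where d: "d > 0" "\<And>y. y \<in> insert z0 (ball 0 1) \<Longrightarrow> norm (y - z0) < d \<Longrightarrow>
      norm (F y - F z0 - L (y - z0)) \<le> e * norm (y - z0)" using der by blast
    define r where "r = 1 - min (d/2) (1/2)"
    have r: "0 < 1 - r" "1 - r < d" "0 \<le> r" "r < 1" using d by (auto simp: r_def)
    define y where "y = of_real r * z0"
    have ny: "norm y = r" using r nz0 by (simp add: y_def norm_mult)
    have yz: "y - z0 = of_real (r - 1) * z0" by (simp add: y_def algebra_simps)
    have nr: "norm (of_real (r - 1) :: complex) = 1 - r" using r by (simp only: norm_of_real)
    have nyz: "norm (y - z0) = 1 - r" using nr nz0 by (simp only: yz norm_mult) simp
    have Lyz: "L (y - z0) = (r - 1) *\<^sub>R L z0"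
      unfolding yz scaleR_conv_of_real[symmetric] using bl by (simp add: linear_simps)
    have yb: "y \<in> ball 0 1" using ny r by simp
    have Fy: "norm (F y) \<le> r" using schwarz[OF cmi inb F0, of y] ny r by simp
    have est: "norm (F y - F z0 - L (y - z0)) \<le> e * (1 - r)" using d(2)[of y] yb nyz r by simp
    have "norm (F z0) \<le> norm (F y - L (y - z0)) + norm (F y - F z0 - L (y - z0))"
      using norm_triangle_ineq4[of "F y - L (y - z0)" "F y - F z0 - L (y - z0)"] by simp
    also have "norm (F y - L (y - z0)) \<le> norm (F y) + norm (L (y - z0))"
      by (rule norm_triangle_ineq4)
    finally have "1 \<le> r + (1 - r) * N + e * (1 - r)"
      using Fy est nF r unfolding Lyz N_def by simp
    hence "(1 - r) * 1 \<le> (1 - r) * (N + e)" by (simp add: algebra_simps)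
    hence "1 \<le> N + e" using r by simp
    thus False using N1 unfolding e_def by (simp add: field_simps)
  qed
  moreover have "N \<le> onorm L * norm z0" unfolding N_def by (rule onorm[OF bl])
  ultimately show ?thesis using nz0 by simp
qed

end
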